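(* Let $\alpha\ge0$, $\mu\ge0$ and $n\in\mathbb{N}$. For every $f\in C_B([0,\infty))$, the function $x\mapsto T_n(f;x)$ belongs to $C_B([0,\infty))$, and $\|T_n(f)\|\le\|f\|$.
   Context: $C_B([0,\infty))$ is the space of bounded continuous real functions on $[0,\infty)$ with the norm $\|f\|=\sup_{x\ge0}|f(x)|$. For $\mu>-\tfrac12$ define $\gamma_\mu(2k)=\dfrac{2^{2k}k!\,\Gamma(k+\mu+1/2)}{\Gamma(\mu+1/2)}$ and $\gamma_\mu(2k+1)=\dfrac{2^{2k+1}k!\,\Gamma(k+\mu+3/2)}{\Gamma(\mu+1/2)}$, $k\ge0$; $e_\mu(x)=\sum_{k\ge0} x^k/\gamma_\mu(k)$; $\theta_k=0$ if $k$ is even and $\theta_k=1$ if $k$ is odd. Let $h_k^\mu(\xi,\alpha)=\gamma_\mu(k)\sum_{j=0}^{\lfloor k/2\rfloor}\dfrac{\alpha^j\xi^{k-2j}}{j!\,\gamma_\mu(k-2j)}$. For $\alpha\ge0,\mu\ge0$, $n\in\mathbb{N}$ and $x\in[0,\infty)$ define $$T_n(f;x)=\frac{1}{e^{\alpha x^2}e_\mu(nx)}\sum_{k=0}^\infty \frac{h_k^\mu(n,\alpha)}{\gamma_\mu(k)}x^k f\!\left(\frac{k+2\mu\theta_k}{n}\right).$$ *)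

theory Defs
  imports "HOL-Analysis.Analysis"
begin

definition gamma_mu :: "real \<Rightarrow> nat \<Rightarrow> real" where
  "gamma_mu \<mu> m =
     (if even m
      then 2 ^ m * fact (m div 2) * Gamma (real (m div 2) + \<mu> + 1/2) / Gamma (\<mu> + 1/2)
      else 2 ^ m * fact (m div 2) * Gamma (real (m div 2) + \<mu> + 3/2) / Gamma (\<mu> + 1/2))"

definition e_mu :: "real \<Rightarrow> real \<Rightarrow> real" where
  "e_mu \<mu> x = (\<Sum>k. x ^ k / gamma_mu \<mu> k)"

definition theta :: "nat \<Rightarrow> real" where
  "theta k = (if even k then 0 else 1)"

definition h_mu :: "real \<Rightarrow> nat \<Rightarrow> real \<Rightarrow> real \<Rightarrow> real" where
  "h_mu \<mu> k \<xi> \<alpha> =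
     gamma_mu \<mu> k * (\<Sum>j\<le>k div 2. \<alpha> ^ j * \<xi> ^ (k - 2 * j) / (fact j * gamma_mu \<mu> (k - 2 * j)))"

definition T_op :: "real \<Rightarrow> real \<Rightarrow> nat \<Rightarrow> (real \<Rightarrow> real) \<Rightarrow> real \<Rightarrow> real" where
  "T_op \<alpha> \<mu> n f x =
     (1 / (exp (\<alpha> * x\<^sup>2) * e_mu \<mu> (real n * x))) *
     (\<Sum>k. h_mu \<mu> k (real n) \<alpha> / gamma_mu \<mu> k * x ^ k
            * f ((real k + 2 * \<mu> * theta k) / real n))"

end

theory Submission
  imports Defs
begin

lemma gamma_Suc:
  assumes "\<mu> \<ge> 0"
  shows "gamma_mu \<mu> (Suc m) = (real (Suc m) + 2 * \<mu> * theta (Suc m)) * gamma_mu \<mu> m"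
proof (cases "even m")
  case True
  then obtain k where k: "m = 2*k" by blast
  have nz: "real k + \<mu> + 1/2 \<notin> \<int>\<^sub>\<le>\<^sub>0" using assms
    by (auto dest!: nonpos_Ints_nonpos)
  have g: "Gamma (real k + \<mu> + 3/2) = (real k + \<mu> + 1/2) * Gamma (real k + \<mu> + 1/2)"
    using Gamma_plus1[OF nz] by (simp add: add.assoc)
  have d: "Suc m div 2 = k" "m div 2 = k" "odd (Suc m)" "even m" using k by auto
  have "gamma_mu \<mu> (Suc m) = 2 ^ Suc m * fact k * ((real k + \<mu> + 1/2) * Gamma (real k + \<mu> + 1/2)) / Gamma (\<mu> + 1/2)"
    unfolding gamma_mu_def using d g by simp
  also have "\<dots> = (real (Suc m) + 2 * \<mu>) * (2 ^ m * fact k * Gamma (real k + \<mu> + 1/2) / Gamma (\<mu> + 1/2))"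
  proof -
    have e: "real (Suc m) + 2 * \<mu> = 2 * (real k + \<mu> + 1/2)" using k by simp
    show ?thesis unfolding e power_Suc by (simp add: field_simps)
  qed
  finally show ?thesis unfolding gamma_mu_def theta_def using d by simp
next
  case False
  then obtain k where k: "m = 2*k+1" by (metis oddE)
  have "Suc m div 2 = Suc k" "m div 2 = k" using k by auto
  moreover have "real (Suc k) + \<mu> + 1/2 = real k + \<mu> + 3/2" by simp
  ultimately show ?thesis using k unfolding gamma_mu_def theta_def
    by (simp add: field_simps)
qed

lemma gamma_pos_fact:
  assumes "\<mu> \<ge> 0"
  shows "gamma_mu \<mu> m \<ge> fact m \<and> gamma_mu \<mu> m > 0"
proof (induction m)
  case 0
  have "Gamma (\<mu> + 1/2) > 0" using assms by simp
  then show ?case unfolding gamma_mu_def by simp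
next
  case (Suc m)
  have t: "theta (Suc m) \<ge> 0" unfolding theta_def by simp
  have "real (Suc m) \<le> real (Suc m) + 2 * \<mu> * theta (Suc m)" using assms t by simp
  then have "fact (Suc m) \<le> (real (Suc m) + 2 * \<mu> * theta (Suc m)) * gamma_mu \<mu> m"
    using Suc by (simp add: mult_mono)
  moreover have "(real (Suc m) + 2 * \<mu> * theta (Suc m)) * gamma_mu \<mu> m > 0"
    using Suc assms t by (simp add: add_pos_nonneg)
  ultimately show ?case using gamma_Suc[OF assms] by simp
qed

lemma e_summ:
  assumes "\<mu> \<ge> 0"
  shows "summable (\<lambda>m. norm (y ^ m / gamma_mu \<mu> m))"
proof (rule summable_comparison_test')
  show "summable (\<lambda>m. inverse (fact m) * \<bar>y\<bar> ^ m)" by (rule summable_exp)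
  fix m :: nat
  have g: "gamma_mu \<mu> m \<ge> fact m" "gamma_mu \<mu> m > 0" using gamma_pos_fact[OF assms] by auto
  have "norm (norm (y ^ m / gamma_mu \<mu> m)) = \<bar>y\<bar> ^ m / gamma_mu \<mu> m"
    using g by (simp add: power_abs)
  also have "\<dots> \<le> \<bar>y\<bar> ^ m / fact m"
    using g by (intro divide_left_mono) auto
  finally show "norm (norm (y ^ m / gamma_mu \<mu> m)) \<le> inverse (fact m) * \<bar>y\<bar> ^ m"
    by (simp add: field_simps)
qed

lemma sums_even:
  fixes c :: "nat \<Rightarrow> real"
  assumes "c sums s"
  shows "(\<lambda>i. if even i then c (i div 2) else 0) sums s"
proof -
  have sm: "strict_mono ((*) (2::nat))" by (simp add: strict_mono_def)
  have z: "\<And>i. i \<notin> range ((*) (2::nat)) \<Longrightarrow> (if even i then c (i div 2) else 0) = 0"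
    by auto
  have "(\<lambda>j. (\<lambda>i. if even i then c (i div 2) else 0) ((*) 2 j)) sums s" using assms by simp
  moreover have "(\<lambda>j. (\<lambda>i. if even i then c (i div 2) else 0) ((*) 2 j)) sums s \<longleftrightarrow> (\<lambda>i. if even i then c (i div 2) else 0) sums s"
    by (rule sums_mono_reindex[OF sm]) (rule z)
  ultimately show ?thesis by simp
qed

lemma sum_even_reindex:
  fixes F :: "nat \<Rightarrow> real"
  assumes "\<And>i. odd i \<Longrightarrow> F i = 0"
  shows "(\<Sum>i\<le>k. F i) = (\<Sum>j\<le>k div 2. F (2 * j))"
proof -
  have "(\<Sum>i\<le>k. F i) = (\<Sum>i\<in>(*) 2 ` {..k div 2}. F i)"
  proof (rule sum.mono_neutral_right)
    show "finite {..k}" by simp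
    show "(*) 2 ` {..k div 2} \<subseteq> {..k}" by auto
    show "\<forall>i\<in>{..k} - (*) 2 ` {..k div 2}. F i = 0"
    proof
      fix i assume i: "i \<in> {..k} - (*) 2 ` {..k div 2}"
      have "odd i"
      proof
        assume "even i"
        then obtain j where "i = 2 * j" by blast
        with i show False by auto
      qed
      then show "F i = 0" by (rule assms)
    qed
  qed
  also have "\<dots> = (\<Sum>j\<le>k div 2. F (2 * j))"
    by (subst sum.reindex) (auto simp: inj_on_def)
  finally show ?thesis .
qed

lemma main_sums:
  assumes "\<mu> \<ge> 0"
  shows "(\<lambda>k. h_mu \<mu> k (real n) \<alpha> / gamma_mu \<mu> k * x ^ k) sums (exp (\<alpha> * x\<^sup>2) * e_mu \<mu> (real n * x))"
proof -
  define A where "A i = (if even i then (\<alpha> * x\<^sup>2) ^ (i div 2) / fact (i div 2) else 0)" for i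
  define B where "B m = (real n * x) ^ m / gamma_mu \<mu> m" for m
  have e1: "(\<lambda>j. (\<alpha> * x\<^sup>2) ^ j / fact j) sums exp (\<alpha> * x\<^sup>2)"
    using exp_converges[of "\<alpha> * x\<^sup>2"] by (simp add: divide_inverse mult.commute)
  have As: "A sums exp (\<alpha> * x\<^sup>2)" unfolding A_def by (rule sums_even[OF e1])
  have e2: "(\<lambda>j. \<bar>\<alpha> * x\<^sup>2\<bar> ^ j / fact j) sums exp \<bar>\<alpha> * x\<^sup>2\<bar>"
    using exp_converges[of "\<bar>\<alpha> * x\<^sup>2\<bar>"] by (simp add: divide_inverse mult.commute)
  have "(\<lambda>i. norm (A i)) = (\<lambda>i. if even i then \<bar>\<alpha> * x\<^sup>2\<bar> ^ (i div 2) / fact (i div 2) else 0)"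
    unfolding A_def by (auto simp: power_abs)
  then have An: "summable (\<lambda>i. norm (A i))" using sums_even[OF e2] sums_summable by metis
  have Bn: "summable (\<lambda>i. norm (B i))" unfolding B_def by (rule e_summ[OF assms])
  have "(\<lambda>k. \<Sum>i\<le>k. A i * B (k - i)) sums ((\<Sum>k. A k) * (\<Sum>k. B k))"
    by (rule Cauchy_product_sums[OF An Bn])
  moreover have "(\<Sum>k. A k) = exp (\<alpha> * x\<^sup>2)" using As sums_unique by metis
  moreover have "(\<Sum>k. B k) = e_mu \<mu> (real n * x)" unfolding B_def e_mu_def by simp
  moreover have "(\<Sum>i\<le>k. A i * B (k - i)) = h_mu \<mu> k (real n) \<alpha> / gamma_mu \<mu> k * x ^ k" for k
  proof -
    have "(\<Sum>i\<le>k. A i * B (k - i)) = (\<Sum>j\<le>k div 2. A (2*j) * B (k - 2*j))"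
      by (rule sum_even_reindex) (simp add: A_def)
    also have "\<dots> = (\<Sum>j\<le>k div 2. \<alpha> ^ j * real n ^ (k - 2 * j) / (fact j * gamma_mu \<mu> (k - 2 * j)) * x ^ k)"
    proof (rule sum.cong[OF refl])
      fix j assume "j \<in> {..k div 2}"
      then have "k = 2 * j + (k - 2 * j)" by auto
      then have xk: "x ^ k = (x\<^sup>2) ^ j * x ^ (k - 2 * j)"
        by (metis power_add power_mult)
      show "A (2*j) * B (k - 2*j) = \<alpha> ^ j * real n ^ (k - 2 * j) / (fact j * gamma_mu \<mu> (k - 2 * j)) * x ^ k"
      proof -
        have "A (2*j) = \<alpha> ^ j * (x\<^sup>2) ^ j / fact j" by (simp add: A_def power_mult_distrib)
        moreover have "B (k - 2*j) = real n ^ (k - 2*j) * x ^ (k - 2*j) / gamma_mu \<mu> (k - 2*j)"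
          by (simp add: B_def power_mult_distrib)
        moreover have "\<And>a b c d e f :: real. (a*b/f) * (c*d/e) = a*c/(f*e) * (b*d)" by simp
        ultimately show ?thesis unfolding xk by metis
      qed
    qed
    also have "\<dots> = h_mu \<mu> k (real n) \<alpha> / gamma_mu \<mu> k * x ^ k"
      using gamma_pos_fact[OF assms, of k] unfolding h_mu_def
      by (simp add: sum_distrib_right)
    finally show ?thesis .
  qed
  ultimately show ?thesis by simp
qed

theorem mainTheorem5:
  fixes \<alpha> \<mu> :: real and n :: nat and f :: "real \<Rightarrow> real"
  assumes "\<alpha> \<ge> 0" and "\<mu> \<ge> 0" and "n \<ge> 1"
    and "continuous_on {0..} f" and "bounded (f ` {0..})"
  shows "continuous_on {0..} (T_op \<alpha> \<mu> n f)
       \<and> bounded (T_op \<alpha> \<mu> n f ` {0..})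
       \<and> (SUP x\<in>{0::real..}. \<bar>T_op \<alpha> \<mu> n f x\<bar>) \<le> (SUP x\<in>{0::real..}. \<bar>f x\<bar>)"
proof -
  note al = assms(1) and mu = assms(2)
  define a where "a k = h_mu \<mu> k (real n) \<alpha> / gamma_mu \<mu> k" for k
  define p where "p k = (real k + 2 * \<mu> * theta k) / real n" for k
  define c where "c k = a k * f (p k)" for k
  define g where "g m = real n ^ m / gamma_mu \<mu> m" for m
  define D where "D x = exp (\<alpha> * x\<^sup>2) * e_mu \<mu> (real n * x)" for x
  define N where "N x = (\<Sum>k. c k * x ^ k)" for x
  define M where "M = (SUP x\<in>{0::real..}. \<bar>f x\<bar>)"
  have gpos: "gamma_mu \<mu> k > 0" for k using gamma_pos_fact[OF mu] by auto
  have a_nn: "a k \<ge> 0" for k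
    unfolding a_def h_mu_def using gpos al
    by (intro divide_nonneg_pos mult_nonneg_nonneg sum_nonneg) (auto intro!: less_imp_le)
  have p_nn: "p k \<ge> 0" for k unfolding p_def theta_def using mu by auto
  obtain B where B: "\<And>y. y \<in> {0..} \<Longrightarrow> \<bar>f y\<bar> \<le> B"
    using assms(5) unfolding bounded_iff by auto
  have bdd: "bdd_above ((\<lambda>x. \<bar>f x\<bar>) ` {0..})" using B by (intro bdd_aboveI2) auto
  have fM: "\<bar>f y\<bar> \<le> M" if "y \<ge> 0" for y
    unfolding M_def using that bdd by (intro cSUP_upper) auto
  have M_nn: "M \<ge> 0" using fM[of 0] by simp
  have Dsums: "(\<lambda>k. a k * x ^ k) sums D x" for x
    unfolding a_def D_def by (rule main_sums[OF mu])
  have c_summ: "summable (\<lambda>k. c k * K ^ k)" for K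
  proof (rule summable_comparison_test')
    show "summable (\<lambda>k. M * (a k * \<bar>K\<bar> ^ k))"
      using Dsums[of "\<bar>K\<bar>"] by (intro summable_mult sums_summable) auto
    fix k :: nat
    have "norm (c k * K ^ k) = a k * \<bar>f (p k)\<bar> * \<bar>K\<bar> ^ k"
      unfolding c_def using a_nn[of k] by (simp add: abs_mult power_abs)
    also have "\<dots> \<le> a k * M * \<bar>K\<bar> ^ k"
      using fM[OF p_nn[of k]] a_nn[of k] by (intro mult_right_mono mult_left_mono) auto
    finally show "norm (c k * K ^ k) \<le> M * (a k * \<bar>K\<bar> ^ k)" by (simp add: ac_simps)
  qed
  have g_summ: "summable (\<lambda>m. g m * K ^ m)" for K
  proof -
    have "summable (\<lambda>m. norm ((real n * K) ^ m / gamma_mu \<mu> m))" by (rule e_summ[OF mu])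
    then have "summable (\<lambda>m. (real n * K) ^ m / gamma_mu \<mu> m)" by (rule summable_norm_cancel)
    then show ?thesis unfolding g_def by (simp add: power_mult_distrib)
  qed
  have e_eq: "e_mu \<mu> (real n * x) = (\<Sum>m. g m * x ^ m)" for x
    unfolding e_mu_def g_def by (simp add: power_mult_distrib)
  have T_eq: "T_op \<alpha> \<mu> n f = (\<lambda>x. (1 / (exp (\<alpha> * x\<^sup>2) * (\<Sum>m. g m * x ^ m))) * N x)"
  proof
    fix x
    show "T_op \<alpha> \<mu> n f x = (1 / (exp (\<alpha> * x\<^sup>2) * (\<Sum>m. g m * x ^ m))) * N x"
      unfolding T_op_def N_def c_def a_def p_def e_eq by (simp add: ac_simps)
  qed
  have e_pos: "e_mu \<mu> y > 0" if "y \<ge> 0" for y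
  proof -
    have "summable (\<lambda>m. y ^ m / gamma_mu \<mu> m)" using e_summ[OF mu] by (rule summable_norm_cancel)
    moreover have "\<And>m. 0 \<le> y ^ m / gamma_mu \<mu> m" using that gpos by (simp add: less_imp_le)
    moreover have "0 < y ^ 0 / gamma_mu \<mu> 0" using gpos by simp
    ultimately show ?thesis unfolding e_mu_def by (rule suminf_pos2)
  qed
  have D_pos: "D x > 0" if "x \<ge> 0" for x
    unfolding D_def using e_pos[of "real n * x"] that by simp
  have cont: "continuous_on {0..} (T_op \<alpha> \<mu> n f)"
  proof (intro continuous_at_imp_continuous_on ballI)
    fix x :: real assume x: "x \<in> {0..}"
    have "norm x < norm (\<bar>x\<bar> + 1)" by simp
    then have iN: "isCont N x" and iE: "isCont (\<lambda>x. \<Sum>m. g m * x ^ m) x"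
      unfolding N_def using isCont_powser[OF c_summ[of "\<bar>x\<bar> + 1"]] isCont_powser[OF g_summ[of "\<bar>x\<bar> + 1"]] by auto
    have nz: "exp (\<alpha> * x\<^sup>2) * (\<Sum>m. g m * x ^ m) \<noteq> 0"
      using D_pos[of x] x unfolding D_def e_eq by auto
    show "isCont (T_op \<alpha> \<mu> n f) x" unfolding T_eq
      using iN iE nz by (intro continuous_intros) auto
  qed
  have Tb: "\<bar>T_op \<alpha> \<mu> n f x\<bar> \<le> M" if x: "x \<ge> 0" for x
  proof -
    have cx: "norm (c k * x ^ k) \<le> M * (a k * x ^ k)" for k
    proof -
      have ax: "a k * x ^ k \<ge> 0" using a_nn[of k] x by simp
      have "norm (c k * x ^ k) = (a k * x ^ k) * \<bar>f (p k)\<bar>"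
        unfolding c_def using a_nn[of k] x by (simp add: abs_mult)
      also have "\<dots> \<le> (a k * x ^ k) * M" using ax fM[OF p_nn[of k]] by (rule mult_left_mono[rotated])
      finally show ?thesis by (simp add: ac_simps)
    qed
    have s1: "summable (\<lambda>k. norm (c k * x ^ k))"
    proof (rule summable_comparison_test')
      show "summable (\<lambda>k. M * (a k * x ^ k))"
        using Dsums[of x] by (intro summable_mult sums_summable) auto
      fix k :: nat
      show "norm (norm (c k * x ^ k)) \<le> M * (a k * x ^ k)"
        using cx[of k] by simp
    qed
    have "\<bar>N x\<bar> \<le> (\<Sum>k. norm (c k * x ^ k))"
      unfolding N_def using summable_norm[OF s1] by simp
    also have "\<dots> \<le> (\<Sum>k. M * (a k * x ^ k))"
    proof (rule suminf_le)
      show "summable (\<lambda>k. M * (a k * x ^ k))"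
        using Dsums[of x] by (intro summable_mult sums_summable) auto
      fix k :: nat
      show "norm (c k * x ^ k) \<le> M * (a k * x ^ k)"
        using cx[of k] by simp
    qed (rule s1)
    also have "\<dots> = M * D x"
      using sums_mult[OF Dsums[of x], of M] sums_unique by metis
    finally have "\<bar>N x\<bar> \<le> M * D x" .
    moreover have "T_op \<alpha> \<mu> n f x = N x / D x"
      unfolding T_eq D_def e_eq by simp
    ultimately show ?thesis using D_pos[OF x] by (simp add: abs_div pos_divide_le_eq)
  qed
  have bnd: "bounded (T_op \<alpha> \<mu> n f ` {0..})"
    unfolding bounded_iff using Tb by auto
  have "(SUP x\<in>{0::real..}. \<bar>T_op \<alpha> \<mu> n f x\<bar>) \<le> M"
    using Tb by (intro cSUP_least) auto
  then show ?thesis using cont bnd unfolding M_def by simp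
qed

end
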